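(* For every $q\in(1,2]$ there exist a real Banach space $X$ whose modulus of smoothness satisfies $\rho(u,X)\le\gamma u^q$ for all $u\ge0$ (for some constant $\gamma>0$) and a dictionary $\mathcal D\subset X$ such that for every integer $m\ge1$ there is $f\in X$, $f\neq0$, with $\|f\|_{A_1(\mathcal D)}<\infty$, such that for every $\alpha\in[0,1]$, $$\frac{\sigma_m(f,\mathcal D)_X}{\|f\|_X^{1-\alpha}\|f\|_{A_1(\mathcal D)}^{\alpha}}\ge\frac12 m^{-\alpha/p},\qquad p:=\frac q{q-1}.$$
   Context: The modulus of smoothness is $\rho(u,X):=\sup_{\|x\|=\|y\|=1}\bigl(\tfrac12(\|x+uy\|+\|x-uy\|)-1\bigr)$. A (symmetric) dictionary is a set $\mathcal D\subset X$ of unit-norm elements with dense span and $g\in\mathcal D\Rightarrow-g\in\mathcal D$. $A_1(\mathcal D)$ is the closed convex hull of $\mathcal D$ and $\|f\|_{A_1(\mathcal D)}:=\inf\{M:f/M\in A_1(\mathcal D)\}$. $\Sigma_m(\mathcal D):=\{\sum_{i=1}^m c_ig_i: g_i\in\mathcal D, c_i\in\mathbb R\}$ and $\sigma_m(f,\mathcal D)_X:=\inf_{h\in\Sigma_m(\mathcal D)}\|f-h\|_X$ is the best $m$-term approximation. *)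

theory Defs
  imports "HOL-Analysis.Analysis" "HOL-Library.Function_Algebras"
begin

text \<open>Ambient vector space: real sequences, with pointwise scalar multiplication.
  Every real vector space of dimension at most the continuum (in particular every
  separable Banach space) is linearly isomorphic to a subspace of it.\<close>

instantiation "fun" :: (type, real_vector) real_vector
begin
definition scaleR_fun :: "real \<Rightarrow> ('a \<Rightarrow> 'b) \<Rightarrow> 'a \<Rightarrow> 'b"
  where "scaleR_fun c f = (\<lambda>x. c *\<^sub>R f x)"
instance
  by standard (auto simp: scaleR_fun_def fun_eq_iff scaleR_add_right scaleR_add_left)
end

type_synonym seq = "nat \<Rightarrow> real"

definition is_norm_on :: "seq set \<Rightarrow> (seq \<Rightarrow> real) \<Rightarrow> bool" where
  "is_norm_on V N \<longleftrightarrow> subspace V \<and>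
     (\<forall>x\<in>V. 0 \<le> N x) \<and> (\<forall>x\<in>V. N x = 0 \<longleftrightarrow> x = 0) \<and>
     (\<forall>x\<in>V. \<forall>c. N (c *\<^sub>R x) = \<bar>c\<bar> * N x) \<and>
     (\<forall>x\<in>V. \<forall>y\<in>V. N (x + y) \<le> N x + N y)"

definition is_banach :: "seq set \<Rightarrow> (seq \<Rightarrow> real) \<Rightarrow> bool" where
  "is_banach V N \<longleftrightarrow> is_norm_on V N \<and>
     (\<forall>s :: nat \<Rightarrow> seq. (\<forall>n. s n \<in> V) \<longrightarrow>
        (\<forall>e>0. \<exists>K. \<forall>m\<ge>K. \<forall>n\<ge>K. N (s m - s n) < e) \<longrightarrow>
        (\<exists>l\<in>V. (\<lambda>n. N (s n - l)) \<longlonglongrightarrow> 0))"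

definition mod_smooth :: "seq set \<Rightarrow> (seq \<Rightarrow> real) \<Rightarrow> real \<Rightarrow> real" where
  "mod_smooth V N u = (SUP (x, y) \<in> {(x, y). x \<in> V \<and> y \<in> V \<and> N x = 1 \<and> N y = 1}.
      (N (x + u *\<^sub>R y) + N (x - u *\<^sub>R y)) / 2 - 1)"

definition nclosure :: "seq set \<Rightarrow> (seq \<Rightarrow> real) \<Rightarrow> seq set \<Rightarrow> seq set" where
  "nclosure V N S = {x \<in> V. \<forall>e>0. \<exists>y\<in>S. N (x - y) < e}"

definition is_dictionary :: "seq set \<Rightarrow> (seq \<Rightarrow> real) \<Rightarrow> seq set \<Rightarrow> bool" where
  "is_dictionary V N D \<longleftrightarrow> D \<subseteq> V \<and> (\<forall>g\<in>D. N g = 1) \<and>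
     nclosure V N (span D) = V \<and> (\<forall>g\<in>D. - g \<in> D)"

definition A1 :: "seq set \<Rightarrow> (seq \<Rightarrow> real) \<Rightarrow> seq set \<Rightarrow> seq set" where
  "A1 V N D = nclosure V N (convex hull D)"

text \<open>The A_1(D)-norm, with value \<infinity> when no M works.\<close>
definition A1_norm :: "seq set \<Rightarrow> (seq \<Rightarrow> real) \<Rightarrow> seq set \<Rightarrow> seq \<Rightarrow> ereal" where
  "A1_norm V N D f = Inf (ereal ` {M. M > 0 \<and> (1 / M) *\<^sub>R f \<in> A1 V N D})"

definition Sigma_m :: "seq set \<Rightarrow> nat \<Rightarrow> seq set" where
  "Sigma_m D m = {(\<Sum>i<m. c i *\<^sub>R g i) | c g. \<forall>i<m. g i \<in> D}"

definition sigma_m :: "(seq \<Rightarrow> real) \<Rightarrow> seq set \<Rightarrow> nat \<Rightarrow> seq \<Rightarrow> real" where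
  "sigma_m N D m f = (INF h \<in> Sigma_m D m. N (f - h))"

end

theory Submission
  imports Defs
begin


lemma sum_fun_app: "(sum f A) (x::'a) = (\<Sum>a\<in>A. (f a x :: real))"
  by (induction A rule: infinite_finite_induct) auto

lemma cvx_pow:
  fixes a b l p :: real
  assumes "1 \<le> p" "0 \<le> a" "0 \<le> b" "0 \<le> l" "l \<le> 1"
  shows "(l*a + (1-l)*b) powr p \<le> l * a powr p + (1-l) * b powr p"
proof -
  have A: "(l*a) powr p \<le> l * a powr p" if "0 \<le> l" "l \<le> 1" "0 \<le> a" for l a :: real
  proof -
    have "l powr p \<le> l powr 1" using that assms(1) by (intro powr_mono') auto
    then have "l powr p \<le> l" using that by (cases "l = 0") auto
    then show ?thesis using that by (simp add: powr_mult mult_right_mono)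
  qed
  show ?thesis
  proof (cases "a = 0 \<or> b = 0")
    case True
    then show ?thesis
    proof
      assume "a = 0" then show ?thesis using A[of "1-l" b] assms by auto
    next
      assume "b = 0" then show ?thesis using A[of l a] assms by auto
    qed
  next
    case False
    then have "a > 0" "b > 0" using assms by auto
    then show ?thesis using convex_onD[OF powr_convex[OF assms(1)], of "1-l" a b] assms
      by auto
  qed
qed

lemma cvx_abs:
  fixes a b l p :: real
  assumes "1 \<le> p" "0 \<le> l" "l \<le> 1"
  shows "\<bar>l*a + (1-l)*b\<bar> powr p \<le> l * \<bar>a\<bar> powr p + (1-l) * \<bar>b\<bar> powr p"
proof -
  have "\<bar>l*a + (1-l)*b\<bar> \<le> l*\<bar>a\<bar> + (1-l)*\<bar>b\<bar>"
  proof -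
    have "\<bar>l*a + (1-l)*b\<bar> \<le> \<bar>l*a\<bar> + \<bar>(1-l)*b\<bar>" by (rule abs_triangle_ineq)
    also have "\<dots> = l*\<bar>a\<bar> + (1-l)*\<bar>b\<bar>" using assms by (simp add: abs_mult)
    finally show ?thesis .
  qed
  then have "\<bar>l*a + (1-l)*b\<bar> powr p \<le> (l*\<bar>a\<bar> + (1-l)*\<bar>b\<bar>) powr p"
    using assms by (intro powr_mono2) auto
  also have "\<dots> \<le> l * \<bar>a\<bar> powr p + (1-l) * \<bar>b\<bar> powr p"
    using assms by (intro cvx_pow) auto
  finally show ?thesis .
qed

lemma subadd_pow:
  fixes s t r :: real
  assumes "0 < r" "r \<le> 1" "0 \<le> s" "0 \<le> t"
  shows "(s+t) powr r \<le> s powr r + t powr r"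
proof (cases "s + t = 0")
  case True then show ?thesis using assms by auto
next
  case False
  then have st: "s + t > 0" using assms by auto
  have B: "x / (s+t) \<le> (x/(s+t)) powr r" if "0 \<le> x" "x \<le> s + t" for x
  proof -
    have "(x/(s+t)) powr 1 \<le> (x/(s+t)) powr r"
      using that st assms by (intro powr_mono') auto
    then show ?thesis using that st by (cases "x = 0") auto
  qed
  have "1 = s/(s+t) + t/(s+t)" using st by (simp add: add_divide_distrib[symmetric])
  also have "\<dots> \<le> (s/(s+t)) powr r + (t/(s+t)) powr r"
    using B[of s] B[of t] assms by auto
  also have "\<dots> = (s powr r + t powr r) / (s+t) powr r"
    using st assms by (simp add: powr_divide add_divide_distrib)
  finally show ?thesis using st by (simp add: field_simps)
qed

lemma concave_pow:
  fixes s t r :: real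
  assumes "0 < r" "r \<le> 1" "0 \<le> s" "0 \<le> t"
  shows "(s powr r + t powr r)/2 \<le> ((s+t)/2) powr r"
proof -
  have "((s powr r + t powr r)/2) powr (1/r) = ((1/2) * s powr r + (1 - 1/2) * t powr r) powr (1/r)"
    by (simp add: field_simps)
  also have "\<dots> \<le> (1/2) * (s powr r) powr (1/r) + (1-1/2) * (t powr r) powr (1/r)"
    using assms by (intro cvx_pow) auto
  also have "\<dots> = (s+t)/2" using assms by (simp add: powr_powr field_simps)
  finally have "((s powr r + t powr r)/2) powr (1/r) \<le> (s+t)/2" .
  then have "(((s powr r + t powr r)/2) powr (1/r)) powr r \<le> ((s+t)/2) powr r"
    using assms by (intro powr_mono2) auto
  then show ?thesis using assms by (simp add: powr_powr)
qed

lemma clarkson: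
  fixes a b q :: real
  assumes "1 \<le> q" "q \<le> 2"
  shows "\<bar>a+b\<bar> powr q + \<bar>a-b\<bar> powr q \<le> 2 * (\<bar>a\<bar> powr q + \<bar>b\<bar> powr q)"
proof -
  define r where "r = q/2"
  have r: "0 < r" "r \<le> 1" using assms by (auto simp: r_def)
  have E: "\<bar>x\<bar> powr q = (x^2) powr r" for x :: real
  proof (cases "x = 0")
    case True then show ?thesis using r assms by auto
  next
    case False
    then have h: "\<bar>x\<bar> powr 2 = x^2" by (simp add: powr_numeral)
    have "(x^2) powr r = (\<bar>x\<bar> powr 2) powr r" by (simp only: h)
    also have "\<dots> = \<bar>x\<bar> powr q" by (simp only: powr_powr r_def) simp
    finally show ?thesis by simp
  qed
  have "\<bar>a+b\<bar> powr q + \<bar>a-b\<bar> powr q = 2 * (((a+b)^2) powr r + ((a-b)^2) powr r)/2"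
    by (simp add: E)
  also have "\<dots> \<le> 2 * (((a+b)^2 + (a-b)^2)/2) powr r"
    using concave_pow[OF r, of "(a+b)^2" "(a-b)^2"] by auto
  also have "((a+b)^2 + (a-b)^2)/2 = a^2 + b^2" by (simp add: power2_eq_square algebra_simps)
  also have "(a^2 + b^2) powr r \<le> (a^2) powr r + (b^2) powr r"
    using subadd_pow[OF r] by auto
  finally show ?thesis by (simp add: E)
qed





lemma scaleR_app[simp]: "(c *\<^sub>R x) i = c * (x i :: real)"
  by (simp add: scaleR_fun_def)

definition lq :: "real \<Rightarrow> seq set" where "lq q = {x. summable (\<lambda>i. \<bar>x i\<bar> powr q)}"
definition Phi :: "real \<Rightarrow> seq \<Rightarrow> real" where "Phi q x = (\<Sum>i. \<bar>x i\<bar> powr q)"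
definition Nq :: "real \<Rightarrow> seq \<Rightarrow> real" where "Nq q x = Phi q x powr (1/q)"

lemma summable_le_nonneg:
  fixes f g :: "nat \<Rightarrow> real"
  assumes "summable g" "\<And>i. 0 \<le> f i" "\<And>i. f i \<le> g i"
  shows "summable f"
proof (rule summable_comparison_test'[where N=0, OF assms(1)])
  fix n :: nat show "norm (f n) \<le> g n" using assms(2,3)[of n] by simp
qed

context
  fixes q :: real
  assumes q1: "1 < q"
begin

lemma Phi_nonneg: "x \<in> lq q \<Longrightarrow> 0 \<le> Phi q x"
  unfolding Phi_def lq_def by (auto intro: suminf_nonneg)

lemma lq_add_bound: "\<bar>a + b\<bar> powr q \<le> 2 powr q * (\<bar>a\<bar> powr q + \<bar>b\<bar> powr q)"
proof -
  have A: "\<bar>(1/2)*a + (1-1/2)*b\<bar> powr q \<le> (1/2) * \<bar>a\<bar> powr q + (1-1/2) * \<bar>b\<bar> powr q"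
    using q1 by (intro cvx_abs) auto
  have B: "\<bar>(1/2)*a + (1-1/2)*b\<bar> powr q = \<bar>a+b\<bar> powr q / 2 powr q"
    by (simp add: powr_divide flip: add_divide_distrib)
  have C: "\<bar>a+b\<bar> powr q / 2 powr q \<le> (1/2) * \<bar>a\<bar> powr q + (1-1/2) * \<bar>b\<bar> powr q"
    using A by (simp only: B)
  have "\<bar>a+b\<bar> powr q = 2 powr q * (\<bar>a+b\<bar> powr q / 2 powr q)" by simp
  also have "\<dots> \<le> 2 powr q * ((1/2) * \<bar>a\<bar> powr q + (1-1/2) * \<bar>b\<bar> powr q)"
    using C by (intro mult_left_mono) auto
  also have "\<dots> \<le> 2 powr q * (\<bar>a\<bar> powr q + \<bar>b\<bar> powr q)"
  proof -
    have "0 \<le> \<bar>a\<bar> powr q" "0 \<le> \<bar>b\<bar> powr q" by auto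
    then show ?thesis by (intro mult_left_mono add_mono) auto
  qed
  finally show ?thesis .
qed

lemma lq_add: "x \<in> lq q \<Longrightarrow> y \<in> lq q \<Longrightarrow> x + y \<in> lq q"
proof -
  assume a: "x \<in> lq q" "y \<in> lq q"
  then have "summable (\<lambda>i. 2 powr q * (\<bar>x i\<bar> powr q + \<bar>y i\<bar> powr q))"
    unfolding lq_def by (intro summable_mult summable_add) auto
  then have "summable (\<lambda>i. \<bar>(x + y) i\<bar> powr q)"
    by (rule summable_le_nonneg) (simp_all add: lq_add_bound)
  then show ?thesis by (simp add: lq_def)
qed

lemma lq_scale: "x \<in> lq q \<Longrightarrow> c *\<^sub>R x \<in> lq q"
  unfolding lq_def by (auto simp: abs_mult powr_mult intro: summable_mult)

lemma lq_subspace: "subspace (lq q)"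
  unfolding subspace_def using lq_add lq_scale by (auto simp: lq_def)

lemma lq_neg: "x \<in> lq q \<Longrightarrow> - x \<in> lq q"
proof -
  have "- x = (-1) *\<^sub>R x" by (rule ext) simp
  then show "x \<in> lq q \<Longrightarrow> - x \<in> lq q" using lq_scale[of x "-1"] by simp
qed 

lemma lq_diff: "x \<in> lq q \<Longrightarrow> y \<in> lq q \<Longrightarrow> x - y \<in> lq q"
  using lq_add[of x "-y"] lq_neg[of y] by simp

lemma Phi_scale: "x \<in> lq q \<Longrightarrow> Phi q (c *\<^sub>R x) = \<bar>c\<bar> powr q * Phi q x"
  unfolding Phi_def lq_def by (auto simp: abs_mult powr_mult intro: suminf_mult)

lemma Phi_zero_iff: "x \<in> lq q \<Longrightarrow> Phi q x = 0 \<longleftrightarrow> x = 0"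
  unfolding Phi_def lq_def by (subst suminf_eq_zero_iff) (auto simp: fun_eq_iff)

lemma Nq_nonneg: "0 \<le> Nq q x" by (simp add: Nq_def)

lemma Phi_Nq: "x \<in> lq q \<Longrightarrow> Phi q x = Nq q x powr q"
  using Phi_nonneg[of x] q1 by (simp add: Nq_def powr_powr)

lemma Nq_scale: "x \<in> lq q \<Longrightarrow> Nq q (c *\<^sub>R x) = \<bar>c\<bar> * Nq q x"
  using q1 Phi_nonneg[of x] Phi_nonneg[of "c *\<^sub>R x"] lq_scale[of x c] by (simp add: Nq_def Phi_scale powr_mult powr_powr)

lemma Nq_zero_iff: "x \<in> lq q \<Longrightarrow> Nq q x = 0 \<longleftrightarrow> x = 0"
  by (simp add: Nq_def Phi_zero_iff)

lemma Nq_le1: assumes "x \<in> lq q" shows "Nq q x \<le> 1 \<longleftrightarrow> Phi q x \<le> 1"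
proof
  assume "Nq q x \<le> 1"
  then have "Nq q x powr q \<le> 1 powr q" using q1 Nq_nonneg[of x] by (intro powr_mono2) auto
  then show "Phi q x \<le> 1" using Phi_Nq[OF assms] by simp
next
  assume h: "Phi q x \<le> 1"
  show "Nq q x \<le> 1"
  proof (rule ccontr)
    assume "\<not> Nq q x \<le> 1"
    then have "1 powr q < Nq q x powr q" using q1 by (intro powr_less_mono2) auto
    then show False using h Phi_Nq[OF assms] by simp
  qed
qed

lemma Phi_convex:
  assumes "x \<in> lq q" "y \<in> lq q" "0 \<le> l" "l \<le> 1"
  shows "Phi q (l *\<^sub>R x + (1-l) *\<^sub>R y) \<le> l * Phi q x + (1-l) * Phi q y"
proof -
  have sx: "summable (\<lambda>i. \<bar>x i\<bar> powr q)" and sy: "summable (\<lambda>i. \<bar>y i\<bar> powr q)"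
    using assms by (auto simp: lq_def)
  have "l *\<^sub>R x + (1-l) *\<^sub>R y \<in> lq q" using assms lq_add lq_scale by auto
  then have s: "summable (\<lambda>i. \<bar>l * x i + (1-l) * y i\<bar> powr q)" by (simp add: lq_def)
  have "Phi q (l *\<^sub>R x + (1-l) *\<^sub>R y) = (\<Sum>i. \<bar>l * x i + (1-l) * y i\<bar> powr q)"
    by (simp add: Phi_def)
  also have "\<dots> \<le> (\<Sum>i. l * \<bar>x i\<bar> powr q + (1-l) * \<bar>y i\<bar> powr q)"
    using assms q1 by (intro suminf_le s summable_add summable_mult sx sy cvx_abs) auto
  also have "\<dots> = l * Phi q x + (1-l) * Phi q y"
    unfolding Phi_def by (subst suminf_add[symmetric]) (auto intro: summable_mult sx sy simp: suminf_mult sx sy)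
  finally show ?thesis .
qed

lemma Nq_triangle:
  assumes "x \<in> lq q" "y \<in> lq q"
  shows "Nq q (x + y) \<le> Nq q x + Nq q y"
proof (cases "Nq q x = 0 \<or> Nq q y = 0")
  case True
  then show ?thesis using assms by (auto simp: Nq_zero_iff Nq_nonneg)
next
  case False
  define a b where "a = Nq q x" "b = Nq q y"
  have ab: "a > 0" "b > 0" using False Nq_nonneg by (auto simp: a_b_def less_le)
  define x' y' where "x' = (1/a) *\<^sub>R x" "y' = (1/b) *\<^sub>R y"
  have lx: "x' \<in> lq q" "y' \<in> lq q" using assms lq_scale by (auto simp: x'_y'_def)
  have "Nq q x' = 1" "Nq q y' = 1" using assms ab by (auto simp: x'_y'_def Nq_scale a_b_def)
  then have px: "Phi q x' = 1" "Phi q y' = 1" using lx by (auto simp: Phi_Nq)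
  define l where "l = a/(a+b)"
  have l: "0 \<le> l" "l \<le> 1" "1 - l = b/(a+b)" using ab by (auto simp: l_def field_simps)
  have eq: "x + y = (a+b) *\<^sub>R (l *\<^sub>R x' + (1-l) *\<^sub>R y')"
    using ab by (auto simp: fun_eq_iff x'_y'_def l l_def field_simps)
  have lz: "l *\<^sub>R x' + (1-l) *\<^sub>R y' \<in> lq q" using lx lq_add lq_scale by auto
  have "Phi q (l *\<^sub>R x' + (1-l) *\<^sub>R y') \<le> 1"
    using Phi_convex[OF lx l(1,2)] px by simp
  then have "Nq q (l *\<^sub>R x' + (1-l) *\<^sub>R y') \<le> 1" using lz by (simp add: Nq_le1)
  then have "Nq q (x+y) \<le> (a+b)" using ab lz by (simp add: eq Nq_scale)
  then show ?thesis by (simp add: a_b_def)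
qed

lemma lq_norm: "is_norm_on (lq q) (Nq q)"
  unfolding is_norm_on_def
  by (simp add: lq_subspace Nq_nonneg Nq_zero_iff Nq_scale Nq_triangle)



end

definition ee :: "nat \<Rightarrow> seq" where "ee k = (\<lambda>i. if i = k then 1 else 0)"
definition Dict :: "seq set" where "Dict = range ee \<union> range (\<lambda>k. - ee k)"

lemma Phi_fin:
  assumes "finite S" "\<And>i. i \<notin> S \<Longrightarrow> x i = 0" "0 < q"
  shows "x \<in> lq q" "Phi q x = (\<Sum>i\<in>S. \<bar>x i\<bar> powr q)"
proof -
  have z: "\<And>i. i \<notin> S \<Longrightarrow> \<bar>x i\<bar> powr q = 0" using assms by simp
  show "x \<in> lq q" unfolding lq_def using summable_finite[OF assms(1) z] by simp
  show "Phi q x = (\<Sum>i\<in>S. \<bar>x i\<bar> powr q)" unfolding Phi_def using suminf_finite[OF assms(1) z] by simp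
qed

context
  fixes q :: real
  assumes q1: "1 < q"
begin

lemma ee_props: "ee k \<in> lq q" "Nq q (ee k) = 1" "- ee k \<in> lq q" "Nq q (- ee k) = 1"
proof -
  have A: "ee k \<in> lq q" "Phi q (ee k) = (\<Sum>i\<in>{k}. \<bar>ee k i\<bar> powr q)"
    using Phi_fin[of "{k}" "ee k" q] q1 by (auto simp: ee_def)
  have B: "- ee k \<in> lq q" "Phi q (- ee k) = (\<Sum>i\<in>{k}. \<bar>(- ee k) i\<bar> powr q)"
    using Phi_fin[of "{k}" "- ee k" q] q1 by (auto simp: ee_def)
  show "ee k \<in> lq q" "- ee k \<in> lq q" using A B by auto
  show "Nq q (ee k) = 1" "Nq q (- ee k) = 1" using A B by (auto simp: Nq_def ee_def)
qed

lemma coord_le: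
  assumes "x \<in> lq q"
  shows "\<bar>x i\<bar> \<le> Nq q x"
proof -
  have s: "summable (\<lambda>i. \<bar>x i\<bar> powr q)" using assms by (simp add: lq_def)
  have "(\<Sum>j\<in>{i}. \<bar>x j\<bar> powr q) \<le> Phi q x"
    unfolding Phi_def by (rule sum_le_suminf[OF s]) auto
  then have "\<bar>x i\<bar> powr q \<le> Phi q x" by simp
  then have "(\<bar>x i\<bar> powr q) powr (1/q) \<le> Phi q x powr (1/q)"
    using q1 by (intro powr_mono2) auto
  then show ?thesis using q1 by (simp add: powr_powr Nq_def)
qed

lemma tail_bound:
  assumes s: "\<And>m. s m \<in> lq q" and lim: "\<And>i. (\<lambda>m. s m i) \<longlonglongrightarrow> l i"
    and C: "\<And>m. m \<ge> K \<Longrightarrow> Phi q (s n - s m) \<le> C"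
  shows "summable (\<lambda>i. \<bar>(s n - l) i\<bar> powr q)" "Phi q (s n - l) \<le> C"
proof -
  have P: "sum (\<lambda>i. \<bar>(s n - l) i\<bar> powr q) {..<J} \<le> C" for J
  proof (rule LIMSEQ_le_const2)
    show "(\<lambda>m. \<Sum>i<J. \<bar>s n i - s m i\<bar> powr q) \<longlonglongrightarrow> (\<Sum>i<J. \<bar>(s n - l) i\<bar> powr q)"
      using q1 by (auto intro!: tendsto_sum tendsto_powr2 tendsto_rabs tendsto_diff lim)
    show "\<exists>N. \<forall>m\<ge>N. (\<Sum>i<J. \<bar>s n i - s m i\<bar> powr q) \<le> C"
    proof (intro exI allI impI)
      fix m assume "K \<le> m"
      have sm: "summable (\<lambda>i. \<bar>(s n - s m) i\<bar> powr q)" using lq_diff[OF q1 s s] by (simp add: lq_def)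
      have "(\<Sum>i<J. \<bar>s n i - s m i\<bar> powr q) = (\<Sum>i<J. \<bar>(s n - s m) i\<bar> powr q)" by simp
      also have "\<dots> \<le> Phi q (s n - s m)" unfolding Phi_def by (rule sum_le_suminf[OF sm]) auto
      also have "\<dots> \<le> C" using C \<open>K \<le> m\<close> by simp
      finally show "(\<Sum>i<J. \<bar>s n i - s m i\<bar> powr q) \<le> C" .
    qed
  qed
  show sm: "summable (\<lambda>i. \<bar>(s n - l) i\<bar> powr q)"
    by (rule summableI_nonneg_bounded[OF _ P]) auto
  show "Phi q (s n - l) \<le> C" unfolding Phi_def by (rule suminf_le_const[OF sm P])
qed

lemma lq_banach: "is_banach (lq q) (Nq q)"
  unfolding is_banach_def
proof (intro conjI lq_norm[OF q1] allI impI)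
  fix s :: "nat \<Rightarrow> seq"
  assume s: "\<forall>n. s n \<in> lq q" and cau: "\<forall>e>0. \<exists>K. \<forall>m\<ge>K. \<forall>n\<ge>K. Nq q (s m - s n) < e"
  have "Cauchy (\<lambda>n. s n i)" for i
  proof (rule CauchyI)
    fix e :: real assume "0 < e"
    then obtain K where K: "\<forall>m\<ge>K. \<forall>n\<ge>K. Nq q (s m - s n) < e" using cau by blast
    show "\<exists>M. \<forall>m\<ge>M. \<forall>n\<ge>M. norm (s m i - s n i) < e"
    proof (intro exI allI impI)
      fix m n assume "K \<le> m" "K \<le> n"
      have "\<bar>(s m - s n) i\<bar> \<le> Nq q (s m - s n)" using coord_le lq_diff[OF q1] s by blast
      then show "norm (s m i - s n i) < e" using K \<open>K \<le> m\<close> \<open>K \<le> n\<close> by fastforce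
    qed
  qed
  then have "convergent (\<lambda>n. s n i)" for i by (simp add: Cauchy_convergent_iff)
  define l where "l = (\<lambda>i. lim (\<lambda>n. s n i))"
  have lim: "(\<lambda>n. s n i) \<longlonglongrightarrow> l i" for i
    using \<open>\<And>i. convergent (\<lambda>n. s n i)\<close> by (simp add: l_def convergent_LIMSEQ_iff)
  have main: "\<exists>K. \<forall>n\<ge>K. s n - l \<in> lq q \<and> Nq q (s n - l) \<le> e" if "e > 0" for e
  proof -
    obtain K where K: "\<forall>m\<ge>K. \<forall>n\<ge>K. Nq q (s m - s n) < e" using cau \<open>e > 0\<close> by blast
    show ?thesis
    proof (intro exI allI impI conjI)
      fix n assume n: "K \<le> n"
      have C: "Phi q (s n - s m) \<le> e powr q" if "m \<ge> K" for m
      proof -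
        have "Nq q (s n - s m) \<le> e" using K n that by (meson less_imp_le)
        then have "Nq q (s n - s m) powr q \<le> e powr q" using q1 by (intro powr_mono2) (auto simp: Nq_nonneg)
        then show ?thesis using Phi_Nq[OF q1 lq_diff[OF q1]] s by simp
      qed
      have T: "summable (\<lambda>i. \<bar>(s n - l) i\<bar> powr q)" "Phi q (s n - l) \<le> e powr q"
        using tail_bound[of s l K, OF _ lim C] s by auto
      show "s n - l \<in> lq q" using T by (simp add: lq_def)
      then have "Phi q (s n - l) powr (1/q) \<le> (e powr q) powr (1/q)"
        using T q1 Phi_nonneg[OF q1] by (intro powr_mono2) auto
      then show "Nq q (s n - l) \<le> e" using q1 \<open>e > 0\<close> by (simp add: Nq_def powr_powr)
    qed
  qed
  obtain K where K: "\<forall>n\<ge>K. s n - l \<in> lq q" using main[of 1] by auto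
  have "l = s K - (s K - l)" by simp
  then have "l \<in> lq q" using lq_diff[OF q1] s K by (metis order_refl)
  moreover have "(\<lambda>n. Nq q (s n - l)) \<longlonglongrightarrow> 0"
  proof (rule LIMSEQ_I)
    fix r :: real assume "0 < r"
    then obtain K where K: "\<forall>n\<ge>K. s n - l \<in> lq q \<and> Nq q (s n - l) \<le> r/2" using main[of "r/2"] by auto
    show "\<exists>no. \<forall>n\<ge>no. norm (Nq q (s n - l) - 0) < r"
    proof (intro exI[of _ K] allI impI)
      fix n assume "K \<le> n"
      then have "Nq q (s n - l) \<le> r/2" using K by auto
      then show "norm (Nq q (s n - l) - 0) < r" using Nq_nonneg[OF q1, of "s n - l"] \<open>0 < r\<close> by simp
    qed
  qed
  ultimately show "\<exists>l\<in>lq q. (\<lambda>n. Nq q (s n - l)) \<longlonglongrightarrow> 0" by blast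
qed

end



context
  fixes q :: real
  assumes q1: "1 < q"
begin

lemma trunc_span: "(\<lambda>i. if i < K then x i else 0) \<in> span Dict"
proof -
  have "(\<lambda>i. if i < K then x i else 0) = (\<Sum>k<K. x k *\<^sub>R ee k)"
  proof (rule ext)
    fix i
    have "(\<Sum>k<K. x k *\<^sub>R ee k) i = (\<Sum>k<K. (if k = i then x k else 0))"
      unfolding sum_fun_app by (intro sum.cong) (auto simp: ee_def)
    also have "\<dots> = (if i < K then x i else 0)" by (simp add: sum.delta)
    finally show "(if i < K then x i else 0) = (\<Sum>k<K. x k *\<^sub>R ee k) i" by simp
  qed
  also have "\<dots> \<in> span Dict"
    by (intro span_sum span_scale span_base) (auto simp: Dict_def)
  finally show ?thesis .
qed

lemma density:
  assumes x: "x \<in> lq q" and e: "e > 0"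
  shows "\<exists>y\<in>span Dict. Nq q (x - y) < e"
proof -
  define f where "f = (\<lambda>i. \<bar>x i\<bar> powr q)"
  have sf: "summable f" using x by (simp add: lq_def f_def)
  have "(\<lambda>n. \<Sum>i<n. f i) \<longlonglongrightarrow> suminf f" by (rule summable_LIMSEQ[OF sf])
  moreover have "e powr q > 0" using e by simp
  ultimately obtain K where K: "\<bar>(\<Sum>i<K. f i) - suminf f\<bar> < e powr q"
    by (metis LIMSEQ_iff real_norm_def order_refl)
  define t where "t = (\<lambda>i. if i < K then x i else 0)"
  have tl: "t \<in> lq q"
    using Phi_fin(1)[of "{..<K}" t q] q1 by (auto simp: t_def)
  have g: "(\<lambda>i. \<bar>(x - t) i\<bar> powr q) = (\<lambda>i. f i - (if i < K then f i else 0))"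
    by (auto simp: t_def f_def fun_eq_iff)
  have s2: "summable (\<lambda>i. if i < K then f i else 0)"
    by (rule summable_finite[of "{..<K}"]) auto
  have "Phi q (x - t) = suminf f - (\<Sum>i. if i < K then f i else 0)"
    unfolding Phi_def g by (rule suminf_diff[OF sf s2, symmetric])
  also have "(\<Sum>i. if i < K then f i else 0) = (\<Sum>i<K. f i)"
    by (subst suminf_finite[of "{..<K}"]) auto
  finally have "Phi q (x - t) < e powr q" using K by linarith
  then have "Phi q (x - t) powr (1/q) < (e powr q) powr (1/q)"
    using q1 Phi_nonneg[OF q1 lq_diff[OF q1 x tl]] by (intro powr_less_mono2) auto
  then have "Nq q (x - t) < e" using q1 e by (simp add: Nq_def powr_powr)
  moreover have "t \<in> span Dict" unfolding t_def by (rule trunc_span)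
  ultimately show ?thesis by blast
qed

lemma Dict_sub: "Dict \<subseteq> lq q"
  using ee_props[OF q1] by (auto simp: Dict_def)

lemma lq_dict: "is_dictionary (lq q) (Nq q) Dict"
  unfolding is_dictionary_def
proof (intro conjI ballI Dict_sub)
  fix g assume "g \<in> Dict" then show "Nq q g = 1" using ee_props[OF q1] by (auto simp: Dict_def)
next
  fix g assume "g \<in> Dict" then show "- g \<in> Dict" by (auto simp: Dict_def)
next
  show "nclosure (lq q) (Nq q) (span Dict) = lq q"
    unfolding nclosure_def using density by auto
qed

lemma smooth_pt:
  assumes x: "x \<in> lq q" and y: "y \<in> lq q" and nx: "Nq q x = 1" and ny: "Nq q y = 1"
    and u: "u \<ge> 0" and q2: "q \<le> 2"
  shows "(Nq q (x + u *\<^sub>R y) + Nq q (x - u *\<^sub>R y)) / 2 - 1 \<le> u powr q"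
proof -
  have px: "Phi q x = 1" and py: "Phi q y = 1" using Phi_Nq[OF q1] x y nx ny by auto
  have l1: "x + u *\<^sub>R y \<in> lq q" and l2: "x - u *\<^sub>R y \<in> lq q"
    using x y lq_add[OF q1] lq_diff[OF q1] lq_scale[OF q1] by auto
  have sx: "summable (\<lambda>i. \<bar>x i\<bar> powr q)" and sy: "summable (\<lambda>i. \<bar>y i\<bar> powr q)"
    and s1: "summable (\<lambda>i. \<bar>(x + u *\<^sub>R y) i\<bar> powr q)" and s2: "summable (\<lambda>i. \<bar>(x - u *\<^sub>R y) i\<bar> powr q)"
    using x y l1 l2 by (auto simp: lq_def)
  define A B where "A = Nq q (x + u *\<^sub>R y)" "B = Nq q (x - u *\<^sub>R y)"
  have AB: "A \<ge> 0" "B \<ge> 0" using Nq_nonneg[OF q1] by (auto simp: A_B_def)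
  have "A powr q + B powr q = Phi q (x + u *\<^sub>R y) + Phi q (x - u *\<^sub>R y)"
    using Phi_Nq[OF q1 l1] Phi_Nq[OF q1 l2] by (simp add: A_B_def)
  also have "\<dots> = (\<Sum>i. \<bar>x i + u * y i\<bar> powr q + \<bar>x i - u * y i\<bar> powr q)"
    unfolding Phi_def using suminf_add[OF s1 s2] by simp
  also have "\<dots> \<le> (\<Sum>i. 2 * (\<bar>x i\<bar> powr q + \<bar>u\<bar> powr q * \<bar>y i\<bar> powr q))"
  proof (rule suminf_le)
    fix i show "\<bar>x i + u * y i\<bar> powr q + \<bar>x i - u * y i\<bar> powr q \<le> 2 * (\<bar>x i\<bar> powr q + \<bar>u\<bar> powr q * \<bar>y i\<bar> powr q)"
      using clarkson[of q "x i" "u * y i"] q1 q2 by (simp add: abs_mult powr_mult)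
  next
    show "summable (\<lambda>i. \<bar>x i + u * y i\<bar> powr q + \<bar>x i - u * y i\<bar> powr q)"
      using summable_add[OF s1 s2] by simp
    show "summable (\<lambda>i. 2 * (\<bar>x i\<bar> powr q + \<bar>u\<bar> powr q * \<bar>y i\<bar> powr q))"
      by (intro summable_mult summable_add sx sy)
  qed
  also have "\<dots> = 2 * (Phi q x + \<bar>u\<bar> powr q * Phi q y)"
    unfolding Phi_def
    by (simp add: suminf_mult sx sy summable_mult suminf_add[symmetric])
  also have "\<dots> = 2 * (1 + u powr q)" using px py u by simp
  finally have S: "A powr q + B powr q \<le> 2 * (1 + u powr q)" .
  have "((1/2) * A + (1 - 1/2) * B) powr q \<le> (1/2) * A powr q + (1 - 1/2) * B powr q"
    using q1 AB by (intro cvx_pow) auto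
  then have "((A + B)/2) powr q \<le> 1 + u powr q" using S by (simp add: field_simps)
  then have "(((A + B)/2) powr q) powr (1/q) \<le> (1 + u powr q) powr (1/q)"
    using AB q1 by (intro powr_mono2) auto
  then have H: "(A + B)/2 \<le> (1 + u powr q) powr (1/q)" using AB q1 by (simp add: powr_powr)
  have "(1 + u powr q) powr (1/q) \<le> (1 + u powr q) powr 1"
    using q1 by (intro powr_mono) auto
  then have "(A + B)/2 \<le> 1 + u powr q" using H by simp
  then show ?thesis unfolding A_B_def by linarith
qed

lemma lq_smooth:
  assumes u: "u \<ge> 0" and q2: "q \<le> 2"
  shows "mod_smooth (lq q) (Nq q) u \<le> 1 * u powr q"
  unfolding mod_smooth_def
proof (rule cSUP_least)
  show "{(x, y). x \<in> lq q \<and> y \<in> lq q \<and> Nq q x = 1 \<and> Nq q y = 1} \<noteq> {}"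
    using ee_props[OF q1, of 0] by auto
next
  fix p assume "p \<in> {(x, y). x \<in> lq q \<and> y \<in> lq q \<and> Nq q x = 1 \<and> Nq q y = 1}"
  then obtain x y where "p = (x, y)" "x \<in> lq q" "y \<in> lq q" "Nq q x = 1" "Nq q y = 1" by auto
  then show "(case p of (x, y) \<Rightarrow> (Nq q (x + u *\<^sub>R y) + Nq q (x - u *\<^sub>R y)) / 2 - 1) \<le> 1 * u powr q"
    using smooth_pt[of x y u] u q2 by simp
qed

end



lemma final_ineq:
  fixes q m s n A alpha :: real
  assumes q1: "1 < q" and m: "1 \<le> m" and a: "0 \<le> alpha" "alpha \<le> 1"
    and s: "m powr (1/q) \<le> s" and n: "n = (2*m) powr (1/q)" and A: "n \<le> A" "A \<le> 2*m"
  shows "1/2 * m powr (- alpha / (q / (q - 1))) \<le> s / (n powr (1 - alpha) * A powr alpha)"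
proof -
  have npos: "n > 0" using n m by simp
  have Apos: "A > 0" using npos A by simp
  define E where "E = (1 - alpha)/q + alpha"
  have E1: "E \<le> 1"
  proof -
    have "(1 - alpha)/q \<le> 1 - alpha" using q1 a by (simp add: divide_le_eq mult_le_cancel_left1)
    then show ?thesis by (simp add: E_def)
  qed
  have Dpos: "n powr (1 - alpha) * A powr alpha > 0" using npos Apos by simp
  have e1: "n powr (1 - alpha) = (2*m) powr ((1 - alpha)/q)" using n m by (simp add: powr_powr)
  have "A powr alpha \<le> (2*m) powr alpha" using A Apos a by (intro powr_mono2) auto
  then have "n powr (1 - alpha) * A powr alpha \<le> n powr (1 - alpha) * (2*m) powr alpha"
    by (rule mult_left_mono) simp
  also have "\<dots> = (2*m) powr ((1 - alpha)/q) * (2*m) powr alpha" using e1 by simp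
  also have "\<dots> = (2*m) powr E" by (simp add: E_def powr_add)
  also have "\<dots> = 2 powr E * m powr E" using m by (simp add: powr_mult)
  finally have D: "n powr (1 - alpha) * A powr alpha \<le> 2 powr E * m powr E" .
  have ex: "- alpha / (q / (q - 1)) + E = 1/q" using q1 by (simp add: E_def field_simps)
  have "1/2 * m powr (- alpha / (q / (q - 1))) * (n powr (1 - alpha) * A powr alpha)
      \<le> 1/2 * m powr (- alpha / (q / (q - 1))) * (2 powr E * m powr E)"
    using D by (intro mult_left_mono) auto
  also have "\<dots> = 1/2 * 2 powr E * m powr (- alpha / (q / (q - 1)) + E)"
    unfolding powr_add by (simp only: mult_ac)
  also have "\<dots> = 1/2 * 2 powr E * m powr (1/q)" by (simp only: ex)
  also have "\<dots> \<le> 1/2 * 2 powr 1 * m powr (1/q)"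
    using E1 by (intro mult_right_mono mult_left_mono powr_mono) auto
  also have "\<dots> \<le> s" using s by simp
  finally show ?thesis using Dpos by (simp add: le_divide_eq)
qed

context
  fixes q :: real
  assumes q1: "1 < q"
begin

lemma ball_convex: "convex {z \<in> lq q. Nq q z \<le> 1}"
proof (rule convexI)
  fix x y :: seq and u v :: real
  assume x: "x \<in> {z \<in> lq q. Nq q z \<le> 1}" and y: "y \<in> {z \<in> lq q. Nq q z \<le> 1}"
    and uv: "0 \<le> u" "0 \<le> v" "u + v = 1"
  have l: "u *\<^sub>R x \<in> lq q" "v *\<^sub>R y \<in> lq q" using x y lq_scale[OF q1] by auto
  have "Nq q (u *\<^sub>R x + v *\<^sub>R y) \<le> Nq q (u *\<^sub>R x) + Nq q (v *\<^sub>R y)" by (rule Nq_triangle[OF q1 l])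
  also have "\<dots> = u * Nq q x + v * Nq q y" using x y uv by (simp add: Nq_scale[OF q1])
  also have "\<dots> \<le> u * 1 + v * 1" using x y uv by (intro add_mono mult_left_mono) auto
  finally show "u *\<^sub>R x + v *\<^sub>R y \<in> {z \<in> lq q. Nq q z \<le> 1}"
    using l lq_add[OF q1] uv by auto
qed

lemma hull_le1: "z \<in> convex hull Dict \<Longrightarrow> z \<in> lq q \<and> Nq q z \<le> 1"
proof -
  assume z: "z \<in> convex hull Dict"
  have "convex hull Dict \<subseteq> {z \<in> lq q. Nq q z \<le> 1}"
    by (rule hull_minimal) (use ee_props[OF q1] ball_convex in \<open>auto simp: Dict_def\<close>)
  then show ?thesis using z by auto
qed

lemma A1_le1: "z \<in> A1 (lq q) (Nq q) Dict \<Longrightarrow> Nq q z \<le> 1"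
proof -
  assume "z \<in> A1 (lq q) (Nq q) Dict"
  then have z: "z \<in> lq q" and c: "\<forall>e>0. \<exists>y\<in>convex hull Dict. Nq q (z - y) < e"
    by (auto simp: A1_def nclosure_def)
  show "Nq q z \<le> 1"
  proof (rule field_le_epsilon)
    fix e :: real assume "0 < e"
    then obtain y where y: "y \<in> convex hull Dict" "Nq q (z - y) < e" using c by blast
    have yl: "y \<in> lq q" "Nq q y \<le> 1" using hull_le1[OF y(1)] by auto
    have "Nq q z = Nq q (y + (z - y))" by simp
    also have "\<dots> \<le> Nq q y + Nq q (z - y)" by (rule Nq_triangle[OF q1 yl(1) lq_diff[OF q1 z yl(1)]])
    finally show "Nq q z \<le> 1 + e" using y yl by simp
  qed
qed

definition ff :: "nat \<Rightarrow> seq" where "ff m = (\<lambda>i. if i < 2*m then 1 else 0)"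

lemma ff_props:
  assumes "m \<ge> 1"
  shows "ff m \<in> lq q" "Nq q (ff m) = (2 * real m) powr (1/q)" "ff m \<noteq> 0"
proof -
  have P: "ff m \<in> lq q" "Phi q (ff m) = (\<Sum>i\<in>{..<2*m}. \<bar>ff m i\<bar> powr q)"
    using Phi_fin[of "{..<2*m}" "ff m" q] q1 by (auto simp: ff_def)
  show "ff m \<in> lq q" by (rule P(1))
  have "(\<Sum>i\<in>{..<2*m}. \<bar>ff m i\<bar> powr q) = (\<Sum>i\<in>{..<2*m}. 1)" by (intro sum.cong) (auto simp: ff_def)
  then have "Phi q (ff m) = 2 * real m" using P by simp
  then show "Nq q (ff m) = (2 * real m) powr (1/q)" by (simp add: Nq_def)
  have "ff m 0 = 1" using assms by (simp add: ff_def)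
  then show "ff m \<noteq> 0" by auto
qed

lemma ff_hull:
  assumes "m \<ge> 1"
  shows "(1 / (2 * real m)) *\<^sub>R ff m \<in> A1 (lq q) (Nq q) Dict"
proof -
  have "(1 / (2 * real m)) *\<^sub>R ff m = (\<Sum>k\<in>{..<2*m}. (1 / (2 * real m)) *\<^sub>R ee k)"
  proof (rule ext)
    fix i
    have "(\<Sum>k\<in>{..<2*m}. (1 / (2 * real m)) *\<^sub>R ee k) i = (\<Sum>k\<in>{..<2*m}. if k = i then 1 / (2 * real m) else 0)"
      unfolding sum_fun_app by (intro sum.cong) (auto simp: ee_def)
    also have "\<dots> = (if i < 2*m then 1 / (2 * real m) else 0)" by (simp add: sum.delta)
    finally show "((1 / (2 * real m)) *\<^sub>R ff m) i = (\<Sum>k\<in>{..<2*m}. (1 / (2 * real m)) *\<^sub>R ee k) i"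
      by (simp add: ff_def)
  qed
  also have "\<dots> \<in> convex hull Dict"
    by (rule convex_sum) (use assms in \<open>auto simp: Dict_def intro: hull_inc\<close>)
  finally have h: "(1 / (2 * real m)) *\<^sub>R ff m \<in> convex hull Dict" .
  have "(1 / (2 * real m)) *\<^sub>R ff m \<in> lq q" using lq_scale[OF q1] ff_props(1)[OF assms] by blast
  then show ?thesis using h Nq_zero_iff[OF q1, of 0] lq_subspace[OF q1]
    by (auto simp: A1_def nclosure_def subspace_def intro!: bexI[of _ "(1 / (2 * real m)) *\<^sub>R ff m"])
qed

lemma A1_norm_ff:
  assumes "m \<ge> 1"
  obtains r where "A1_norm (lq q) (Nq q) Dict (ff m) = ereal r"
    "Nq q (ff m) \<le> r" "r \<le> 2 * real m"
proof -
  define S where "S = {M. M > 0 \<and> (1 / M) *\<^sub>R ff m \<in> A1 (lq q) (Nq q) Dict}"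
  have up: "Inf (ereal ` S) \<le> ereal (2 * real m)"
    using ff_hull[OF assms] assms by (intro Inf_lower) (auto simp: S_def)
  have low: "ereal (Nq q (ff m)) \<le> Inf (ereal ` S)"
  proof (rule Inf_greatest)
    fix x assume "x \<in> ereal ` S"
    then obtain M where M: "x = ereal M" "M > 0" "(1 / M) *\<^sub>R ff m \<in> A1 (lq q) (Nq q) Dict"
      by (auto simp: S_def)
    have "Nq q ((1 / M) *\<^sub>R ff m) \<le> 1" by (rule A1_le1[OF M(3)])
    then have "Nq q (ff m) / M \<le> 1" using M ff_props(1)[OF assms] by (simp add: Nq_scale[OF q1])
    then show "ereal (Nq q (ff m)) \<le> x" using M by (simp add: divide_le_eq)
  qed
  have eq: "A1_norm (lq q) (Nq q) Dict (ff m) = Inf (ereal ` S)" by (simp add: A1_norm_def S_def)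
  obtain r where "Inf (ereal ` S) = ereal r" using up low by (cases "Inf (ereal ` S)") auto
  then show ?thesis using that up low eq by auto
qed

lemma sigma_lower:
  assumes m: "m \<ge> 1" and h: "h \<in> Sigma_m Dict m"
  shows "real m powr (1/q) \<le> Nq q (ff m - h)"
proof -
  obtain c g where hg: "h = (\<Sum>i<m. c i *\<^sub>R g i)" "\<forall>i<m. g i \<in> Dict"
    using h by (auto simp: Sigma_m_def)
  define Z where "Z = (\<Union>i<m. {j. g i j \<noteq> 0})"
  have supp: "{j. g i j \<noteq> 0} = {k}" if "g i = ee k \<or> g i = - ee k" for i k
  proof -
    have A: "{j. ee k j \<noteq> 0} = {k}" "{j. (- ee k) j \<noteq> 0} = {k}" by (auto simp: ee_def fun_Compl_def)
    show ?thesis using that by (elim disjE) (simp_all add: A)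
  qed
  have fin1: "finite {j. g i j \<noteq> 0} \<and> card {j. g i j \<noteq> 0} \<le> 1" if "i < m" for i
  proof -
    have "g i \<in> Dict" using hg(2) that by auto
    then obtain k where "g i = ee k \<or> g i = - ee k" unfolding Dict_def by blast
    then show ?thesis using supp by auto
  qed
  have finZ: "finite Z" using fin1 by (auto simp: Z_def)
  have "card Z \<le> (\<Sum>i<m. card {j. g i j \<noteq> 0})" unfolding Z_def by (rule card_UN_le) simp
  also have "\<dots> \<le> (\<Sum>i<m. 1)" using fin1 by (intro sum_mono) auto
  finally have cardZ: "card Z \<le> m" by simp
  have hz: "h j = 0" if "j \<notin> Z" for j
    using that unfolding hg(1) sum_fun_app by (auto simp: Z_def intro!: sum.neutral)
  define T where "T = {..<2*m} \<union> Z"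
  have supT: "(ff m - h) j = 0" if "j \<notin> T" for j using that hz by (auto simp: T_def ff_def)
  have fT: "finite T" using finZ by (simp add: T_def)
  have P: "Phi q (ff m - h) = (\<Sum>j\<in>T. \<bar>(ff m - h) j\<bar> powr q)"
    using Phi_fin(2)[of T "ff m - h" q, OF fT supT] q1 by simp
  have "real m \<le> real (card ({..<2*m} - Z))"
  proof -
    have "card {..<2*m} - card Z \<le> card ({..<2*m} - Z)" by (rule diff_card_le_card_Diff[OF finZ])
    then show ?thesis using cardZ by simp
  qed
  also have "\<dots> = (\<Sum>j\<in>{..<2*m} - Z. \<bar>(ff m - h) j\<bar> powr q)"
    using hz by (simp add: ff_def)
  also have "\<dots> \<le> (\<Sum>j\<in>T. \<bar>(ff m - h) j\<bar> powr q)"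
    using fT by (intro sum_mono2) (auto simp: T_def)
  finally have "real m \<le> Phi q (ff m - h)" using P by simp
  then have "real m powr (1/q) \<le> Phi q (ff m - h) powr (1/q)" using q1 by (intro powr_mono2) auto
  then show ?thesis by (simp add: Nq_def)
qed

lemma sigma_ff:
  assumes m: "m \<ge> 1"
  shows "real m powr (1/q) \<le> sigma_m (Nq q) Dict m (ff m)"
  unfolding sigma_m_def
proof (rule cINF_greatest)
  have "0 \<in> Sigma_m Dict m" unfolding Sigma_m_def
    by (auto intro!: exI[of _ "\<lambda>_. 0"] exI[of _ "\<lambda>_. ee 0"] simp: Dict_def)
  then show "Sigma_m Dict m \<noteq> {}" by blast
next
  fix h assume "h \<in> Sigma_m Dict m"
  then show "real m powr (1/q) \<le> Nq q (ff m - h)" by (rule sigma_lower[OF m])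
qed

end

theorem mainTheorem6:
  fixes q :: real
  assumes "1 < q" and "q \<le> 2"
  shows "\<exists>(V :: seq set) (N :: seq \<Rightarrow> real) (\<gamma> :: real) (D :: seq set).
     is_banach V N \<and> \<gamma> > 0 \<and> (\<forall>u\<ge>0. mod_smooth V N u \<le> \<gamma> * u powr q) \<and>
     is_dictionary V N D \<and>
     (\<forall>m::nat. m \<ge> 1 \<longrightarrow>
        (\<exists>f\<in>V. f \<noteq> 0 \<and> A1_norm V N D f < \<infinity> \<and>
           (\<forall>\<alpha>::real. 0 \<le> \<alpha> \<and> \<alpha> \<le> 1 \<longrightarrow>
              sigma_m N D m f / (N f powr (1 - \<alpha>) * real_of_ereal (A1_norm V N D f) powr \<alpha>)
                \<ge> 1 / 2 * real m powr (- \<alpha> / (q / (q - 1))))))"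
proof (intro exI conjI allI impI)
  show "is_banach (lq q) (Nq q)" by (rule lq_banach[OF assms(1)])
  show "(0::real) < 1" by simp
  show "mod_smooth (lq q) (Nq q) u \<le> 1 * u powr q" if "u \<ge> 0" for u
    using lq_smooth[OF assms(1) that assms(2)] .
  show "is_dictionary (lq q) (Nq q) Dict" by (rule lq_dict[OF assms(1)])
  fix m :: nat assume m: "m \<ge> 1"
  obtain r where r: "A1_norm (lq q) (Nq q) Dict (ff m) = ereal r"
    "Nq q (ff m) \<le> r" "r \<le> 2 * real m"
    using A1_norm_ff[OF assms(1) m] by blast
  show "\<exists>f\<in>lq q. f \<noteq> 0 \<and> A1_norm (lq q) (Nq q) Dict f < \<infinity> \<and>
           (\<forall>\<alpha>::real. 0 \<le> \<alpha> \<and> \<alpha> \<le> 1 \<longrightarrow>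
              sigma_m (Nq q) Dict m f / (Nq q f powr (1 - \<alpha>) * real_of_ereal (A1_norm (lq q) (Nq q) Dict f) powr \<alpha>)
                \<ge> 1 / 2 * real m powr (- \<alpha> / (q / (q - 1))))"
  proof (intro bexI[of _ "ff m"] conjI allI impI)
    show "ff m \<in> lq q" "ff m \<noteq> 0" using ff_props[OF assms(1) m] by auto
    show "A1_norm (lq q) (Nq q) Dict (ff m) < \<infinity>" using r by simp
    fix alpha :: real assume a: "0 \<le> alpha \<and> alpha \<le> 1"
    show "1 / 2 * real m powr (- alpha / (q / (q - 1)))
        \<le> sigma_m (Nq q) Dict m (ff m) /
           (Nq q (ff m) powr (1 - alpha) * real_of_ereal (A1_norm (lq q) (Nq q) Dict (ff m)) powr alpha)"
      unfolding r(1) real_of_ereal.simps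
      using final_ineq[OF assms(1) _ _ _ sigma_ff[OF assms(1) m] ff_props(2)[OF assms(1) m] r(2) r(3)] a m
      by simp
  qed
qed



end
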